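(* For every triangle $ABC$ with $b=c>a$, we have $AX_{25}<AX_{24}<AX_{14}$; that is, in the isosceles order, $X_{25}\prec X_{24}\prec X_{14}$.
   Context: $X_n$ denotes the $n$-th triangle center listed in Kimberling's Encyclopedia of Triangle Centers (ETC), given by barycentric coordinates in terms of $a=BC$, $b=CA$, $c=AB$. The isosceles order: $P\prec Q$ if $P$ is closer to $A$ than $Q$ in every isosceles triangle $ABC$ with $b=c>a$. *)

theory Defs
  imports Complex_Main
begin

type_synonym bary = "real \<times> real \<times> real"

definition cyclic_bary :: "(real \<Rightarrow> real \<Rightarrow> real \<Rightarrow> real) \<Rightarrow> real \<Rightarrow> real \<Rightarrow> real \<Rightarrow> bary" where
  "cyclic_bary f a b c = (f a b c, f b c a, f c a b)"

definition tri_area :: "real \<Rightarrow> real \<Rightarrow> real \<Rightarrow> real" where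
  "tri_area a b c = sqrt ((a+b+c) * (-a+b+c) * (a-b+c) * (a+b-c)) / 4"

definition X14 :: "real \<Rightarrow> real \<Rightarrow> real \<Rightarrow> bary" where
  "X14 = cyclic_bary (\<lambda>a b c. a^4 - 2*(b^2 - c^2)^2
           + a^2 * (b^2 + c^2 - 4 * sqrt 3 * tri_area a b c))"

text \<open>ETC X(24): a^2 (a^4+b^4+c^4-2a^2b^2-2a^2c^2) / (b^2+c^2-a^2)
  (trilinears sec A cos 2A).\<close>
definition X24 :: "real \<Rightarrow> real \<Rightarrow> real \<Rightarrow> bary" where
  "X24 = cyclic_bary (\<lambda>a b c. a^2 * (a^4 + b^4 + c^4 - 2*a^2*b^2 - 2*a^2*c^2) / (b^2 + c^2 - a^2))"

definition X25 :: "real \<Rightarrow> real \<Rightarrow> real \<Rightarrow> bary" where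
  "X25 = cyclic_bary (\<lambda>a b c. a^2 / (b^2 + c^2 - a^2))"

text \<open>Distance from vertex A to the point with barycentrics (x:y:z) in a triangle
  with side lengths a = BC, b = CA, c = AB. With normalized (u,v,w),
  AP = v AB + w AC, so |AP|^2 = v^2 c^2 + w^2 b^2 + 2 v w (AB . AC),
  where AB . AC = (b^2+c^2-a^2)/2.\<close>
definition dist_from_A :: "bary \<Rightarrow> real \<Rightarrow> real \<Rightarrow> real \<Rightarrow> real" where
  "dist_from_A P a b c =
     (case P of (x, y, z) \<Rightarrow>
        let s = x + y + z; v = y / s; w = z / s
        in sqrt (v^2 * c^2 + w^2 * b^2 + v * w * (b^2 + c^2 - a^2)))"

end

theory Submission imports Defs begin
lemma dist_sym:
  assumes "4*b^2 - a^2 > 0"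
  shows "dist_from_A (x, y, y) a b b = \<bar>y/(x+2*y)\<bar> * sqrt (4*b^2 - a^2)"
proof -
  define v where "v = y/(x+y+y)"
  have "x+y+y = x+2*y" by simp
  have "dist_from_A (x, y, y) a b b = sqrt (v^2 * b^2 + v^2 * b^2 + v * v * (b^2 + b^2 - a^2))"
    by (simp only: dist_from_A_def Let_def v_def prod.case)
  also have "v^2 * b^2 + v^2 * b^2 + v * v * (b^2 + b^2 - a^2) = v^2 * (4*b^2 - a^2)"
    by (simp add: power2_eq_square algebra_simps)
  also have "sqrt (v^2 * (4*b^2 - a^2)) = \<bar>v\<bar> * sqrt (4*b^2 - a^2)"
    by (simp add: real_sqrt_mult)
  finally show ?thesis using \<open>x+y+y = x+2*y\<close> by (simp only: v_def)
qed

lemma less_by_sq: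
  fixes p q :: real
  assumes "0 < p" "q^2 < p^2"
  shows "q < p"
proof (cases "q \<le> 0")
  case True then show ?thesis using assms by simp
next
  case False then show ?thesis using assms
    using power_less_imp_less_base by fastforce
qed
lemma coords14:
  fixes a b e r :: real
  assumes a: "a > 0" and e: "e > 0" and hb: "b^2 = a^2 + e"
    and ar: "4 * sqrt 3 * tri_area a b b = a * r" "4 * sqrt 3 * tri_area b b a = a * r"
        "4 * sqrt 3 * tri_area b a b = a * r"
  shows "X14 a b b = (a^4 + a^2*(2*(a^2+e) - a*r),
      (a^2+e)^2 - 2*e^2 + (a^2+e)*(2*a^2+e - a*r), (a^2+e)^2 - 2*e^2 + (a^2+e)*(2*a^2+e - a*r))"
proof -
  have 1: "a ^ 4 - 2 * (b\<^sup>2 - b\<^sup>2)\<^sup>2 + a\<^sup>2 * (b\<^sup>2 + b\<^sup>2 - a * r) =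
     a ^ 4 + a\<^sup>2 * (2 * (a\<^sup>2 + e) - a * r)" using hb by simp
  have 2: "b ^ 4 - 2 * (b\<^sup>2 - a\<^sup>2)\<^sup>2 + b\<^sup>2 * (b\<^sup>2 + a\<^sup>2 - a * r) =
     (a\<^sup>2 + e)\<^sup>2 - 2 * e\<^sup>2 + (a\<^sup>2 + e) * (2 * a\<^sup>2 + e - a * r)" using hb by algebra
  have 3: "b ^ 4 - 2 * (a\<^sup>2 - b\<^sup>2)\<^sup>2 + b\<^sup>2 * (a\<^sup>2 + b\<^sup>2 - a * r) =
     (a\<^sup>2 + e)\<^sup>2 - 2 * e\<^sup>2 + (a\<^sup>2 + e) * (2 * a\<^sup>2 + e - a * r)" using hb by algebra
  show ?thesis
    unfolding X14_def cyclic_bary_def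
    by (simp only: ar 1 2 3)
qed

lemma coords:
  fixes a b e :: real
  assumes a: "a > 0" and e: "e > 0" and hb: "b^2 = a^2 + e"
  shows "X25 a b b = (a^2/(a^2+2*e), (a^2+e)/a^2, (a^2+e)/a^2)"
    and "X24 a b b = (a^2*(a^4 + 2*(a^2+e)^2 - 4*a^2*(a^2+e))/(a^2+2*e), -(a^2+e)*(a^2+2*e), -(a^2+e)*(a^2+2*e))"
proof -
  have D: "b^2 + b^2 - a^2 = a^2+2*e" "b^2 + a^2 - b^2 = a^2" "a^2 + b^2 - b^2 = a^2" using hb by simp_all
  have a2: "a^2 \<noteq> 0" using a by simp
  show "X25 a b b = (a^2/(a^2+2*e), (a^2+e)/a^2, (a^2+e)/a^2)"
    by (simp add: X25_def cyclic_bary_def D hb)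
  have n1: "b^2*(b^4+b^4+a^4-2*b^2*b^2-2*b^2*a^2) = (-(a^2+e)*(a^2+2*e)) * a^2"
    using hb by algebra
  have n2: "b^2*(b^4+a^4+b^4-2*b^2*a^2-2*b^2*b^2) = (-(a^2+e)*(a^2+2*e)) * a^2"
    using hb by algebra
  have n0: "a^4+b^4+b^4-2*a^2*b^2-2*a^2*b^2 = a^4 + 2*(a^2+e)^2 - 4*a^2*(a^2+e)"
    using hb by algebra
  have y: "b^2*(b^4+b^4+a^4-2*b^2*b^2-2*b^2*a^2)/(b^2+a^2-b^2) = -(a^2+e)*(a^2+2*e)"
    unfolding D(2) by (subst divide_eq_eq) (simp only: a2 n1 not_False_eq_True if_True refl)
  have z: "b^2*(b^4+a^4+b^4-2*b^2*a^2-2*b^2*b^2)/(a^2+b^2-b^2) = -(a^2+e)*(a^2+2*e)"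
    unfolding D(3) by (subst divide_eq_eq) (simp only: a2 n2 not_False_eq_True if_True refl)
  show "X24 a b b = (a^2*(a^4 + 2*(a^2+e)^2 - 4*a^2*(a^2+e))/(a^2+2*e), -(a^2+e)*(a^2+2*e), -(a^2+e)*(a^2+2*e))"
    unfolding X24_def cyclic_bary_def by (simp only: y z n0 D(1))
qed

lemma pos_lem: "0 < (a::real) \<Longrightarrow> 0 < (e::real) \<Longrightarrow> 0 < 64*a^2*e^8 + 176*a^4*e^7 + 320*a^6*e^6 + 376*a^8*e^5 + 220*a^10*e^4 + 48*a^12*e^3"
  by (intro add_pos_pos mult_pos_pos zero_less_power) simp_all

lemma frac_lt:
  fixes n1 n2 d1 d2 :: real
  assumes "0 < d1" "0 < d2" "n1 * d2 < n2 * d1"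
  shows "n1 / d1 < n2 / d2"
  using assms by (simp add: divide_simps)

theorem theorem3p6:
  fixes a b c :: real
  assumes "a > 0" and "b = c" and "b > a"
  shows "dist_from_A (X25 a b c) a b c < dist_from_A (X24 a b c) a b c
       \<and> dist_from_A (X24 a b c) a b c < dist_from_A (X14 a b c) a b c"
proof -
  have a: "a > 0" by (rule assms(1))
  define e where "e = b^2 - a^2"
  have "a^2 < b^2" using assms by (intro power_strict_mono) auto
  then have e: "e > 0" unfolding e_def by simp
  have hb: "b^2 = a^2 + e" by (simp add: e_def)
  have a2pos: "a^2 > 0" using a by simp
  have K: "4*b^2 - a^2 > 0" using hb e a2pos by linarith
  define S where "S = sqrt (4*b^2 - a^2)"
  have S: "S > 0" "S^2 = 4*b^2 - a^2" using K by (auto simp: S_def)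
  define r where "r = sqrt 3 * S"
  have r: "r > 0" "r^2 = 3*(3*a^2 + 4*e)"
    using S hb by (auto simp: r_def power_mult_distrib)
  have area: "tri_area a b b = a * S / 4" "tri_area b b a = a * S / 4" "tri_area b a b = a * S / 4"
  proof -
    have q: "(a+b+b) * (-a+b+b) * (a-b+b) * (a+b-b) = a^2 * (4*b^2 - a^2)"
      "(b+b+a) * (-b+b+a) * (b-b+a) * (b+b-a) = a^2 * (4*b^2 - a^2)"
      "(b+a+b) * (-b+a+b) * (b-a+b) * (b+a-b) = a^2 * (4*b^2 - a^2)"
      by (simp_all add: power2_eq_square algebra_simps)
    have sq: "sqrt (a^2 * (4*b^2 - a^2)) = a * S"
      using a by (simp add: S_def real_sqrt_mult)
    show "tri_area a b b = a * S / 4" "tri_area b b a = a * S / 4" "tri_area b a b = a * S / 4"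
      by (simp_all only: tri_area_def q sq)
  qed
  have ar: "4 * sqrt 3 * tri_area a b b = a * r" "4 * sqrt 3 * tri_area b b a = a * r"
        "4 * sqrt 3 * tri_area b a b = a * r" by (simp_all add: area r_def)
  note C = coords[OF a e hb] coords14[OF a e hb ar]
  have dA: "\<And>x y. dist_from_A (x, y, y) a b b = \<bar>y/(x+2*y)\<bar> * S"
    using dist_sym[OF K] by (simp add: S_def)
  define B where "B = a^2 + e"
  define D where "D = a^2 + 2*e"
  define M where "M = 8*e^3 + 14*a^2*e^2 + 10*a^4*e + 3*a^6"
  have Bp: "B > 0" "D > 0" using a2pos e unfolding B_def D_def by linarith+
  have Mp: "M > 0" unfolding M_def using a e by (intro add_pos_pos mult_pos_pos zero_less_power) simp_all
  have a0: "a \<noteq> 0" using a by simp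
  have v25: "(B/a^2) / (a^2/D + 2*(B/a^2)) = B*D/(a^4 + 2*B*D)"
    using a0 Bp by (simp add: field_simps power2_eq_square power4_eq_xxxx)
  define p24 where "p24 = a^2*(a^4 + 2*B^2 - 4*a^2*B)/D"
  have n24: "a^2*(a^4 + 2*B^2 - 4*a^2*B) + 2*(-B*D)*D = -M"
    unfolding B_def D_def M_def by algebra
  have s24: "p24 + 2*(-B*D) = -M/D"
    unfolding p24_def using Bp n24[symmetric] by (simp add: field_simps)
  have v24: "(-B*D) / (p24 + 2*(-B*D)) = B*D*D/M"
    unfolding s24 using Bp Mp by (simp add: field_simps)
  define Y where "Y = B*r - 3*a^3 - 5*a*e"
  define Z where "Z = r*(3*a^2 + 2*e - a*r)"
  define p14 where "p14 = a^4 + a^2*(2*B - a*r)"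
  define q14 where "q14 = B^2 - 2*e^2 + B*(2*a^2 + e - a*r)"
  have q14: "q14 = -a*Y" unfolding q14_def Y_def B_def by algebra
  have s14: "p14 + 2*q14 = -a*Z" unfolding p14_def q14_def Z_def B_def using r(2) by algebra
  have v14: "q14/(p14 + 2*q14) = Y/Z" by (subst s14, subst q14) (use a0 in simp)
  have Yp: "Y > 0"
  proof -
    have "(B*r)^2 - (3*a^3+5*a*e)^2 = 4*e^2*(2*a^2+3*e)" unfolding B_def using r(2) by algebra
    moreover have "4*e^2*(2*a^2+3*e) > 0" using a e by (intro mult_pos_pos add_pos_pos) simp_all
    ultimately have "(3*a^3+5*a*e)^2 < (B*r)^2" by linarith
    then have "3*a^3+5*a*e < B*r" by (rule less_by_sq[OF mult_pos_pos[OF Bp(1) r(1)]])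
    then show ?thesis unfolding Y_def by linarith
  qed
  have Zp: "Z > 0"
  proof -
    have "(3*a^2+2*e)^2 - (a*r)^2 = 4*e^2" using r(2) by algebra
    moreover have "4*e^2 > 0" using e by simp
    ultimately have "(a*r)^2 < (3*a^2+2*e)^2" by linarith
    moreover have "0 < 3*a^2+2*e" using a2pos e by linarith
    ultimately have "a*r < 3*a^2+2*e" using less_by_sq by blast
    then show ?thesis unfolding Z_def using r by simp
  qed
  have den: "0 < a^4 + 2*B*D" using Bp a by (intro add_pos_pos mult_pos_pos zero_less_power) auto
  have lt1: "B*D/(a^4 + 2*B*D) < B*D*D/M"
  proof (rule frac_lt)
    show "0 < a^4 + 2*B*D" by (rule den)
    show "0 < M" by (rule Mp)
    have "B*D*D*(a^4 + 2*B*D) - B*D*M = B*D*(2*a^2*B*e)"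
      unfolding B_def D_def M_def by algebra
    moreover have "B*D*(2*a^2*B*e) > 0" using Bp a2pos e by simp
    ultimately show "B*D*M < B*D*D*(a^4 + 2*B*D)" by linarith
  qed
  have lt2: "B*D*D/M < Y/Z"
  proof (rule frac_lt)
    show "0 < M" by (rule Mp)
    show "0 < Z" by (rule Zp)
    define P where "P = 6*a^2*e^3 + 10*a^4*e^2 + 4*a^6*e"
    define Q where "Q = 8*a*e^4 + 38*a^3*e^3 + 40*a^5*e^2 + 12*a^7*e"
    have d: "Y*M - B*D*D*Z = Q - r*P"
      unfolding Y_def M_def Z_def P_def Q_def B_def D_def using r(2) by algebra
    have Qp: "Q > 0" unfolding Q_def using a e by (intro add_pos_pos mult_pos_pos zero_less_power) simp_all
    have "Q^2 - (r*P)^2 = 64*a^2*e^8 + 176*a^4*e^7 + 320*a^6*e^6 + 376*a^8*e^5 + 220*a^10*e^4 + 48*a^12*e^3"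
      unfolding Q_def P_def using r(2) by algebra
    with pos_lem[OF a e] have "(r*P)^2 < Q^2" by linarith
    then have "r*P < Q" by (rule less_by_sq[OF Qp])
    with d show "B*D*D*Z < Y*M" by linarith
  qed
  have pos25: "B*D/(a^4 + 2*B*D) > 0" using Bp den by simp
  note C' = C[folded B_def D_def]
  have X25e: "X25 a b b = (a^2/D, B/a^2, B/a^2)" using C'(1) .
  have X24e: "X24 a b b = (p24, -B*D, -B*D)" using C'(2) unfolding p24_def .
  have X14e: "X14 a b b = (p14, q14, q14)" using C'(3) unfolding p14_def q14_def by simp
  have d25: "dist_from_A (X25 a b b) a b b = B*D/(a^4 + 2*B*D) * S"
    unfolding X25e dA v25 by (simp only: abs_of_pos[OF pos25])
  have d24: "dist_from_A (X24 a b b) a b b = B*D*D/M * S"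
    unfolding X24e dA v24 by (simp only: abs_of_pos[OF less_trans[OF pos25 lt1]])
  have d14: "dist_from_A (X14 a b b) a b b = Y/Z * S"
    unfolding X14e dA v14 by (simp only: abs_of_pos[OF divide_pos_pos[OF Yp Zp]])
  show ?thesis
    unfolding assms(2)[symmetric] d25 d24 d14
    using mult_strict_right_mono[OF lt1 S(1)] mult_strict_right_mono[OF lt2 S(1)] by (rule conjI)
qed

end
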